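(* Let $X,Y$ be Scott domains quantified, respectively, by partial metrics $p_X,p_Y$. Then the cartesian product $X\times Y$ (with the componentwise order) is quantified by the partial metric $p_{X\times Y}:=\frac12(p_X+p_Y)$, i.e. $p_{X\times Y}(\langle x,y\rangle,\langle x',y'\rangle)=\frac12\big(p_X(x,x')+p_Y(y,y')\big)$.
   Context: A partial metric (PM) on $X$ is $p:X\times X\to[0,+\infty]$ with $p(x,x)\leq p(x,y)$; $p(x,x)=p(x,y)=p(y,y)\Rightarrow x=y$; $p(x,y)=p(y,x)$; $p(x,y)\leq p(x,z)+p(z,y)-p(z,z)$. Open balls $B^p_\epsilon(x)=\{y\mid p(y,x)<p(x,x)+\epsilon\}$, and $\mathcal O_p(X)$ is the topology of unions of open balls. In a dcpo, $x\ll y$ iff every directed $\Delta$ with $y\leq\bigvee\Delta$ contains some $d\geq x$; a basis is a $B\subseteq X$ with $\{b\in B\mid b\ll x\}$ directed with join $x$ for every $x$; an element $x$ is compact if $x\ll x$. A domain is a dcpo with a countable basis; it is bounded complete if every finite subset having an upper bound has a join; it is algebraic if it has a basis of compact elements. A Scott domain is a bounded complete algebraic domain. The Scott topology $\mathcal O_\sigma(X)$ consists of upper sets $U$ with $x\in U\Rightarrow\exists y\ll x,\ y\in U$. A dcpo $X$ is quantified by $p$ if $\mathcal O_\sigma(X)=\mathcal O_p(X)$. *)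

theory Defs
  imports Main "HOL-Library.Extended_Nonnegative_Real" "HOL-Library.Product_Order"
    "HOL-Library.Countable_Set"
begin

definition is_lub :: "'a::order set \<Rightarrow> 'a \<Rightarrow> bool" where
  "is_lub D s \<longleftrightarrow> (\<forall>d\<in>D. d \<le> s) \<and> (\<forall>u. (\<forall>d\<in>D. d \<le> u) \<longrightarrow> s \<le> u)"

definition directed_set :: "'a::order set \<Rightarrow> bool" where
  "directed_set D \<longleftrightarrow> D \<noteq> {} \<and> (\<forall>a\<in>D. \<forall>b\<in>D. \<exists>c\<in>D. a \<le> c \<and> b \<le> c)"

definition is_dcpo :: "'a::order itself \<Rightarrow> bool" where
  "is_dcpo _ \<longleftrightarrow> (\<forall>D::'a set. directed_set D \<longrightarrow> (\<exists>s. is_lub D s))"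

definition way_below :: "'a::order \<Rightarrow> 'a \<Rightarrow> bool" (infix "\<lless>" 50) where
  "x \<lless> y \<longleftrightarrow> (\<forall>D s. directed_set D \<longrightarrow> is_lub D s \<longrightarrow> y \<le> s \<longrightarrow> (\<exists>d\<in>D. x \<le> d))"

definition is_basis :: "'a::order set \<Rightarrow> bool" where
  "is_basis B \<longleftrightarrow> (\<forall>x. directed_set {b\<in>B. b \<lless> x} \<and> is_lub {b\<in>B. b \<lless> x} x)"

definition compact_elem :: "'a::order \<Rightarrow> bool" where
  "compact_elem x \<longleftrightarrow> x \<lless> x"

definition is_domain :: "'a::order itself \<Rightarrow> bool" where
  "is_domain T \<longleftrightarrow> is_dcpo T \<and> (\<exists>B::'a set. countable B \<and> is_basis B)"

definition bounded_complete :: "'a::order itself \<Rightarrow> bool" where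
  "bounded_complete _ \<longleftrightarrow>
     (\<forall>F::'a set. finite F \<longrightarrow> (\<exists>u. \<forall>f\<in>F. f \<le> u) \<longrightarrow> (\<exists>s. is_lub F s))"

definition algebraic :: "'a::order itself \<Rightarrow> bool" where
  "algebraic _ \<longleftrightarrow> (\<exists>B::'a set. is_basis B \<and> (\<forall>b\<in>B. compact_elem b))"

definition scott_domain :: "'a::order itself \<Rightarrow> bool" where
  "scott_domain T \<longleftrightarrow> is_domain T \<and> bounded_complete T \<and> algebraic T"

definition scott_open :: "'a::order set \<Rightarrow> bool" where
  "scott_open U \<longleftrightarrow> (\<forall>x y. x \<in> U \<longrightarrow> x \<le> y \<longrightarrow> y \<in> U) \<and> (\<forall>x\<in>U. \<exists>y\<in>U. y \<lless> x)"

text \<open>The triangle law p(x,y) <= p(x,z)+p(z,y)-p(z,z) is stated in the subtraction-free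
  form p(x,y)+p(z,z) <= p(x,z)+p(z,y), as usual for extended values.\<close>
definition partial_metric :: "('a \<Rightarrow> 'a \<Rightarrow> ennreal) \<Rightarrow> bool" where
  "partial_metric p \<longleftrightarrow>
     (\<forall>x y. p x x \<le> p x y) \<and>
     (\<forall>x y. p x x = p x y \<and> p x y = p y y \<longrightarrow> x = y) \<and>
     (\<forall>x y. p x y = p y x) \<and>
     (\<forall>x y z. p x y + p z z \<le> p x z + p z y)"

definition pm_ball :: "('a \<Rightarrow> 'a \<Rightarrow> ennreal) \<Rightarrow> 'a \<Rightarrow> real \<Rightarrow> 'a set" where
  "pm_ball p x \<epsilon> = {y. p y x < p x x + ennreal \<epsilon>}"

definition pm_open :: "('a \<Rightarrow> 'a \<Rightarrow> ennreal) \<Rightarrow> 'a set \<Rightarrow> bool" where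
  "pm_open p U \<longleftrightarrow> (\<exists>\<B>. \<B> \<subseteq> {pm_ball p x \<epsilon> | x \<epsilon>. \<epsilon> > 0} \<and> U = \<Union>\<B>)"

definition quantified_by :: "('a::order \<Rightarrow> 'a \<Rightarrow> ennreal) \<Rightarrow> bool" where
  "quantified_by p \<longleftrightarrow> (\<forall>U. scott_open U \<longleftrightarrow> pm_open p U)"

end

theory Submission
  imports Defs
begin


lemma lub_fst:
  assumes "is_lub (D::('a::order \<times> 'b::order) set) s"
  shows "is_lub (fst ` D) (fst s)"
  unfolding is_lub_def
proof (intro conjI allI impI ballI)
  fix d assume "d \<in> fst ` D"
  then obtain e where "e \<in> D" "d = fst e" by blast
  then show "d \<le> fst s" using assms unfolding is_lub_def less_eq_prod_def by blast
next
  fix u assume u: "\<forall>d\<in>fst ` D. d \<le> u"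
  have "\<forall>e\<in>D. e \<le> (u, snd s)"
  proof
    fix e assume e: "e \<in> D"
    then have "fst e \<le> u" using u by blast
    moreover have "snd e \<le> snd s" using e assms unfolding is_lub_def less_eq_prod_def by blast
    ultimately show "e \<le> (u, snd s)" unfolding less_eq_prod_def by simp
  qed
  then have "s \<le> (u, snd s)" using assms unfolding is_lub_def by blast
  then show "fst s \<le> u" unfolding less_eq_prod_def by simp
qed

lemma lub_snd:
  assumes "is_lub (D::('a::order \<times> 'b::order) set) s"
  shows "is_lub (snd ` D) (snd s)"
  unfolding is_lub_def
proof (intro conjI allI impI ballI)
  fix d assume "d \<in> snd ` D"
  then obtain e where "e \<in> D" "d = snd e" by blast
  then show "d \<le> snd s" using assms unfolding is_lub_def less_eq_prod_def by blast
next
  fix u assume u: "\<forall>d\<in>snd ` D. d \<le> u"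
  have "\<forall>e\<in>D. e \<le> (fst s, u)"
  proof
    fix e assume e: "e \<in> D"
    then have "snd e \<le> u" using u by blast
    moreover have "fst e \<le> fst s" using e assms unfolding is_lub_def less_eq_prod_def by blast
    ultimately show "e \<le> (fst s, u)" unfolding less_eq_prod_def by simp
  qed
  then have "s \<le> (fst s, u)" using assms unfolding is_lub_def by blast
  then show "snd s \<le> u" unfolding less_eq_prod_def by simp
qed

lemma dir_fst:
  assumes "directed_set (D::('a::order \<times> 'b::order) set)"
  shows "directed_set (fst ` D)"
  unfolding directed_set_def
proof (intro conjI ballI)
  show "fst ` D \<noteq> {}" using assms unfolding directed_set_def by blast
  fix a b assume "a \<in> fst ` D" "b \<in> fst ` D"
  then obtain a' b' where "a' \<in> D" "b' \<in> D" "a = fst a'" "b = fst b'" by blast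
  then obtain c where "c \<in> D" "a' \<le> c" "b' \<le> c" using assms unfolding directed_set_def by blast
  then show "\<exists>c\<in>fst ` D. a \<le> c \<and> b \<le> c" using \<open>a = fst a'\<close> \<open>b = fst b'\<close>
    unfolding less_eq_prod_def by blast
qed

lemma dir_snd:
  assumes "directed_set (D::('a::order \<times> 'b::order) set)"
  shows "directed_set (snd ` D)"
  unfolding directed_set_def
proof (intro conjI ballI)
  show "snd ` D \<noteq> {}" using assms unfolding directed_set_def by blast
  fix a b assume "a \<in> snd ` D" "b \<in> snd ` D"
  then obtain a' b' where "a' \<in> D" "b' \<in> D" "a = snd a'" "b = snd b'" by blast
  then obtain c where "c \<in> D" "a' \<le> c" "b' \<le> c" using assms unfolding directed_set_def by blast
  then show "\<exists>c\<in>snd ` D. a \<le> c \<and> b \<le> c" using \<open>a = snd a'\<close> \<open>b = snd b'\<close>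
    unfolding less_eq_prod_def by blast
qed

lemma wb_prod:
  assumes "(a::'a::order) \<lless> x" "(b::'b::order) \<lless> y"
  shows "(a, b) \<lless> (x, y)"
  unfolding way_below_def
proof (intro allI impI)
  fix D s assume D: "directed_set D" "is_lub D s" "(x, y) \<le> s"
  have "x \<le> fst s" using D(3) unfolding less_eq_prod_def by simp
  then obtain e1 where "e1 \<in> fst ` D" "a \<le> e1"
    using assms(1) dir_fst[OF D(1)] lub_fst[OF D(2)] unfolding way_below_def by blast
  then obtain d1 where d1: "d1 \<in> D" "a \<le> fst d1" by blast
  have "y \<le> snd s" using D(3) unfolding less_eq_prod_def by simp
  then obtain e2 where "e2 \<in> snd ` D" "b \<le> e2"
    using assms(2) dir_snd[OF D(1)] lub_snd[OF D(2)] unfolding way_below_def by blast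
  then obtain d2 where d2: "d2 \<in> D" "b \<le> snd d2" by blast
  obtain d where d: "d \<in> D" "d1 \<le> d" "d2 \<le> d" using D(1) d1 d2 unfolding directed_set_def by blast
  have "a \<le> fst d" using d1(2) d(2) unfolding less_eq_prod_def by (blast intro: order_trans)
  moreover have "b \<le> snd d" using d2(2) d(3) unfolding less_eq_prod_def by (blast intro: order_trans)
  ultimately have "(a, b) \<le> d" unfolding less_eq_prod_def by simp
  then show "\<exists>d\<in>D. (a, b) \<le> d" using d(1) by blast
qed

lemma wb_mono: "c \<lless> x \<Longrightarrow> x \<le> y \<Longrightarrow> c \<lless> y"
  unfolding way_below_def by (meson order_trans)

lemma wb_le: "c \<lless> (x::'a::order) \<Longrightarrow> c \<le> x"
proof -
  assume "c \<lless> x"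
  moreover have "directed_set {x}" unfolding directed_set_def by auto
  moreover have "is_lub {x} x" unfolding is_lub_def by auto
  ultimately show ?thesis unfolding way_below_def by blast
qed

lemma scott_open_prod:
  assumes "scott_open (A::'a::order set)" "scott_open (B::'b::order set)"
  shows "scott_open (A \<times> B)"
  unfolding scott_open_def
proof (intro conjI allI impI ballI)
  fix x y :: "'a \<times> 'b" assume h: "x \<in> A \<times> B" "x \<le> y"
  have "fst y \<in> A" using h assms(1) unfolding scott_open_def less_eq_prod_def by (metis mem_Times_iff)
  moreover have "snd y \<in> B" using h assms(2) unfolding scott_open_def less_eq_prod_def by (metis mem_Times_iff)
  ultimately show "y \<in> A \<times> B" by (simp add: mem_Times_iff)
next
  fix z assume z: "z \<in> A \<times> B"
  obtain a where a: "a \<in> A" "a \<lless> fst z" using assms(1) z unfolding scott_open_def by auto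
  obtain b where b: "b \<in> B" "b \<lless> snd z" using assms(2) z unfolding scott_open_def by auto
  have "(a, b) \<lless> z" using wb_prod[OF a(2) b(2)] by simp
  then show "\<exists>y\<in>A \<times> B. y \<lless> z" using a(1) b(1) by blast
qed

lemma scott_open_union:
  assumes "\<forall>z\<in>U. \<exists>V. scott_open V \<and> z \<in> V \<and> V \<subseteq> U"
  shows "scott_open U"
  unfolding scott_open_def
proof (intro conjI allI impI ballI)
  fix x y assume "x \<in> U" "x \<le> y"
  then show "y \<in> U" using assms unfolding scott_open_def by blast
next
  fix x assume "x \<in> U"
  then obtain V where "scott_open V" "x \<in> V" "V \<subseteq> U" using assms by blast
  then show "\<exists>y\<in>U. y \<lless> x" unfolding scott_open_def by blast
qed

lemma compact_up: "compact_elem c \<Longrightarrow> scott_open {z. c \<le> z}"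
  unfolding scott_open_def compact_elem_def
proof (intro conjI allI impI ballI)
  fix x y assume "c \<lless> c" "x \<in> {z. c \<le> z}" "x \<le> y"
  then show "y \<in> {z. c \<le> z}" by (auto intro: order_trans)
next
  fix x assume "c \<lless> c" "x \<in> {z. c \<le> z}"
  then have "c \<lless> x" using wb_mono by blast
  then show "\<exists>y\<in>{z. c \<le> z}. y \<lless> x" by blast
qed

lemma lub_prod:
  assumes A: "is_lub A (x::'a::order)" and B: "is_lub B (y::'b::order)" and ne: "A \<noteq> {}" "B \<noteq> {}"
  shows "is_lub (A \<times> B) (x, y)"
  unfolding is_lub_def
proof (intro conjI allI impI ballI)
  fix d assume "d \<in> A \<times> B"
  then show "d \<le> (x, y)" using A B unfolding is_lub_def less_eq_prod_def by auto
next
  fix u assume u: "\<forall>d\<in>A \<times> B. d \<le> u"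
  obtain a0 where a0: "a0 \<in> A" using ne by blast
  obtain b0 where b0: "b0 \<in> B" using ne by blast
  have "\<forall>a\<in>A. a \<le> fst u" using u b0 unfolding less_eq_prod_def by auto
  then have "x \<le> fst u" using A unfolding is_lub_def by blast
  moreover have "\<forall>b\<in>B. b \<le> snd u" using u a0 unfolding less_eq_prod_def by auto
  then have "y \<le> snd u" using B unfolding is_lub_def by blast
  ultimately show "(x, y) \<le> u" unfolding less_eq_prod_def by simp
qed

lemma dir_prod:
  assumes A: "directed_set (A::'a::order set)" and B: "directed_set (B::'b::order set)"
  shows "directed_set (A \<times> B)"
  unfolding directed_set_def
proof (intro conjI ballI)
  show "A \<times> B \<noteq> {}" using A B unfolding directed_set_def by blast
  fix p q assume "p \<in> A \<times> B" "q \<in> A \<times> B"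
  then have "fst p \<in> A" "fst q \<in> A" "snd p \<in> B" "snd q \<in> B" by auto
  then obtain a b where "a \<in> A" "fst p \<le> a" "fst q \<le> a" "b \<in> B" "snd p \<le> b" "snd q \<le> b"
    using A B unfolding directed_set_def by meson
  then show "\<exists>c\<in>A \<times> B. p \<le> c \<and> q \<le> c" unfolding less_eq_prod_def
    by (intro bexI[of _ "(a, b)"]) auto
qed

lemma alg_approx:
  assumes "algebraic TYPE('a::order)" "algebraic TYPE('b::order)"
    and U: "scott_open (U::('a \<times> 'b) set)" and xy: "(x, y) \<in> U"
  shows "\<exists>c d. compact_elem c \<and> compact_elem d \<and> c \<le> x \<and> d \<le> y \<and> (c, d) \<in> U"
proof -
  obtain BX :: "'a set" where BX: "is_basis BX" "\<forall>b\<in>BX. compact_elem b"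
    using assms(1) unfolding algebraic_def by blast
  obtain BY :: "'b set" where BY: "is_basis BY" "\<forall>b\<in>BY. compact_elem b"
    using assms(2) unfolding algebraic_def by blast
  define CX where "CX = {b\<in>BX. b \<lless> x}"
  define CY where "CY = {b\<in>BY. b \<lless> y}"
  have cx: "directed_set CX" "is_lub CX x" using BX(1) unfolding is_basis_def CX_def by auto
  have cy: "directed_set CY" "is_lub CY y" using BY(1) unfolding is_basis_def CY_def by auto
  have ne: "CX \<noteq> {}" "CY \<noteq> {}" using cx(1) cy(1) unfolding directed_set_def by auto
  obtain ab where ab: "ab \<in> U" "ab \<lless> (x, y)" using U xy unfolding scott_open_def by blast
  have "\<exists>d\<in>CX \<times> CY. ab \<le> d"
    using ab(2) dir_prod[OF cx(1) cy(1)] lub_prod[OF cx(2) cy(2) ne] unfolding way_below_def by blast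
  then obtain c d where cd: "c \<in> CX" "d \<in> CY" "ab \<le> (c, d)" by blast
  have "(c, d) \<in> U" using U ab cd unfolding scott_open_def by blast
  moreover have "compact_elem c" "c \<le> x" using cd(1) BX(2) wb_le unfolding CX_def by auto
  moreover have "compact_elem d" "d \<le> y" using cd(2) BY(2) wb_le unfolding CY_def by auto
  ultimately show ?thesis by blast
qed

lemma univ_open:
  assumes "is_domain TYPE('a::order)"
  shows "scott_open (UNIV::'a set)"
proof -
  obtain B :: "'a set" where "is_basis B" using assms unfolding is_domain_def by blast
  have "\<forall>x::'a. \<exists>b. b \<lless> x"
  proof
    fix x :: 'a
    have "{b\<in>B. b \<lless> x} \<noteq> {}" using \<open>is_basis B\<close> unfolding is_basis_def directed_set_def by blast
    then show "\<exists>b. b \<lless> x" by blast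
  qed
  then show ?thesis unfolding scott_open_def by blast
qed



lemma fin_real: "(x::ennreal) < top \<Longrightarrow> \<exists>r\<ge>0. x = ennreal r"
  by (cases x) auto

lemma pm_facts:
  assumes "partial_metric p"
  shows "p x x \<le> p x y" "p x y = p y x" "p x y + p z z \<le> p x z + p z y"
  using assms unfolding partial_metric_def by blast+

lemma half_le: "(a::ennreal) / 2 \<le> b / 2 \<longleftrightarrow> a \<le> b"
proof
  assume "a / 2 \<le> b / 2"
  then have "a / 2 * 2 \<le> b / 2 * 2" by (rule mult_right_mono) simp
  then show "a \<le> b" by (simp add: ennreal_divide_times)
qed (rule divide_right_mono_ennreal)

lemma half_lt: "(a::ennreal) / 2 < b / 2 \<longleftrightarrow> a < b"
  using half_le[of b a] by (simp add: not_le[symmetric])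

lemma half_eq: "(a::ennreal) / 2 = b / 2 \<longleftrightarrow> a = b"
  using half_le[of a b] half_le[of b a] by (metis order_antisym order_refl)

lemma half_eps: "ennreal e = ennreal (2 * e) / 2"
proof (cases "e \<ge> 0")
  case True
  then show ?thesis using ennreal_divide_numeral[of "2*e"] by simp
next
  case False
  then show ?thesis by (simp add: ennreal_neg)
qed

lemma ballP:
  "z \<in> pm_ball (\<lambda>(x::'a, y::'b) (x', y'). (pX x x' + pY y y') / 2) c e \<longleftrightarrow>
   pX (fst z) (fst c) + pY (snd z) (snd c) < pX (fst c) (fst c) + pY (snd c) (snd c) + ennreal (2 * e)"
proof -
  have "z \<in> pm_ball (\<lambda>(x::'a, y::'b) (x', y'). (pX x x' + pY y y') / 2) c e \<longleftrightarrow>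
     (pX (fst z) (fst c) + pY (snd z) (snd c)) / 2 < (pX (fst c) (fst c) + pY (snd c) (snd c)) / 2 + ennreal (2 * e) / 2"
    unfolding pm_ball_def half_eps[of e, symmetric] by (simp add: case_prod_beta)
  also have "\<dots> \<longleftrightarrow> pX (fst z) (fst c) + pY (snd z) (snd c) < pX (fst c) (fst c) + pY (snd c) (snd c) + ennreal (2 * e)" by (simp only: add_divide_distrib_ennreal[symmetric] half_lt)
  finally show ?thesis .
qed

lemma pmP:
  assumes pX: "partial_metric pX" and pY: "partial_metric pY"
    and fX: "\<forall>x. pX x x < top" and fY: "\<forall>y. pY y y < top"
  shows "partial_metric (\<lambda>(x::'a, y::'b) (x', y'). (pX x x' + pY y y') / 2)"
  unfolding partial_metric_def
proof (intro conjI allI impI)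
  fix z w :: "'a \<times> 'b"
  obtain x y where z: "z = (x, y)" by force
  obtain x' y' where w: "w = (x', y')" by force
  show "(case z of (x, y) \<Rightarrow> \<lambda>(x', y'). (pX x x' + pY y y') / 2) z
       \<le> (case z of (x, y) \<Rightarrow> \<lambda>(x', y'). (pX x x' + pY y y') / 2) w"
    unfolding z w using pm_facts(1)[OF pX, of x x'] pm_facts(1)[OF pY, of y y']
    by (simp add: half_le add_mono)
  show "(case z of (x, y) \<Rightarrow> \<lambda>(x', y'). (pX x x' + pY y y') / 2) w =
        (case w of (x, y) \<Rightarrow> \<lambda>(x', y'). (pX x x' + pY y y') / 2) z"
    unfolding z w using pm_facts(2)[OF pX, of x x'] pm_facts(2)[OF pY, of y y'] by simp
next
  fix z w :: "'a \<times> 'b"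
  obtain x y where z: "z = (x, y)" by force
  obtain x' y' where w: "w = (x', y')" by force
  assume h: "(case z of (x, y) \<Rightarrow> \<lambda>(x', y'). (pX x x' + pY y y') / 2) z =
       (case z of (x, y) \<Rightarrow> \<lambda>(x', y'). (pX x x' + pY y y') / 2) w \<and>
       (case z of (x, y) \<Rightarrow> \<lambda>(x', y'). (pX x x' + pY y y') / 2) w =
       (case w of (x, y) \<Rightarrow> \<lambda>(x', y'). (pX x x' + pY y y') / 2) w"
  then have e1: "pX x x + pY y y = pX x x' + pY y y'" and e2: "pX x x' + pY y y' = pX x' x' + pY y' y'"
    unfolding z w by (simp_all add: half_eq)
  obtain a where a: "a \<ge> 0" "pX x x = ennreal a" using fin_real fX by blast
  obtain b where b: "b \<ge> 0" "pY y y = ennreal b" using fin_real fY by blast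
  obtain a' where a': "a' \<ge> 0" "pX x' x' = ennreal a'" using fin_real fX by blast
  obtain b' where b': "b' \<ge> 0" "pY y' y' = ennreal b'" using fin_real fY by blast
  have "pX x x' + pY y y' = ennreal (a + b)" using e1 a b by simp
  then have t: "pX x x' + pY y y' < top" by simp
  have "pX x x' \<le> pX x x' + pY y y'" by simp
  then have "pX x x' < top" using t by (rule le_less_trans)
  then obtain c where c: "c \<ge> 0" "pX x x' = ennreal c" using fin_real by blast
  have "pY y y' \<le> pX x x' + pY y y'" by simp
  then have "pY y y' < top" using t by (rule le_less_trans)
  then obtain d where d: "d \<ge> 0" "pY y y' = ennreal d" using fin_real by blast
  have r1: "a + b = c + d" using e1 a b c d by (simp flip: ennreal_plus)
  have r2: "c + d = a' + b'" using e2 a' b' c d by (simp flip: ennreal_plus)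
  have "a \<le> c" using pm_facts(1)[OF pX, of x x'] a c by simp
  moreover have "b \<le> d" using pm_facts(1)[OF pY, of y y'] b d by simp
  moreover have "a' \<le> c" using pm_facts(1)[OF pX, of x' x] pm_facts(2)[OF pX, of x x'] a' c by (metis ennreal_le_iff)
  moreover have "b' \<le> d" using pm_facts(1)[OF pY, of y' y] pm_facts(2)[OF pY, of y y'] b' d by (metis ennreal_le_iff)
  ultimately have "a = c" "b = d" "a' = c" "b' = d" using r1 r2 by linarith+
  then have "x = x'" "y = y'" using pX pY a b a' b' c d unfolding partial_metric_def by metis+
  then show "z = w" using z w by simp
next
  fix z w u :: "'a \<times> 'b"
  obtain x y where z: "z = (x, y)" by force
  obtain x' y' where w: "w = (x', y')" by force
  obtain x'' y'' where u: "u = (x'', y'')" by force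
  have "(pX x x' + pY y y') + (pX x'' x'' + pY y'' y'') \<le> (pX x x'' + pY y y'') + (pX x'' x' + pY y'' y')"
    using add_mono[OF pm_facts(3)[OF pX, of x x' x''] pm_facts(3)[OF pY, of y y' y'']]
    by (simp add: ac_simps)
  then show "(case z of (x, y) \<Rightarrow> \<lambda>(x', y'). (pX x x' + pY y y') / 2) w +
       (case u of (x, y) \<Rightarrow> \<lambda>(x', y'). (pX x x' + pY y y') / 2) u
       \<le> (case z of (x, y) \<Rightarrow> \<lambda>(x', y'). (pX x x' + pY y y') / 2) u +
          (case u of (x, y) \<Rightarrow> \<lambda>(x', y'). (pX x x' + pY y y') / 2) w"
    unfolding z w u by (simp add: add_divide_distrib_ennreal[symmetric] half_le)
qed


lemma ennreal_add_lt: "0 \<le> a \<Longrightarrow> 0 \<le> b \<Longrightarrow> 0 \<le> c \<Longrightarrow> ennreal a < ennreal b + ennreal c \<longleftrightarrow> a < b + c"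
  by (simp add: ennreal_plus[symmetric] ennreal_less_iff del: ennreal_plus)

lemma ennreal_add_le: "0 \<le> a \<Longrightarrow> 0 \<le> b \<Longrightarrow> 0 \<le> c \<Longrightarrow> 0 \<le> d \<Longrightarrow> ennreal a + ennreal b \<le> ennreal c + ennreal d \<longleftrightarrow> a + b \<le> c + d"
  by (simp add: ennreal_plus[symmetric] del: ennreal_plus)

lemma lt_top_sum: "(a::ennreal) + b \<le> c \<Longrightarrow> c < top \<Longrightarrow> a < top"
proof -
  assume h: "a + b \<le> c" "c < top"
  have "a \<le> a + b" by simp
  then show ?thesis using h by (meson le_less_trans order_trans)
qed

lemma ball_fin:
  assumes pm: "partial_metric p" and y: "y \<in> pm_ball p x e"
  shows "p y x < top" "p x x < top" "p y y < top"
proof -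
  have h: "p y x < p x x + ennreal e" using y unfolding pm_ball_def by simp
  show 1: "p y x < top" by (rule less_le_trans[OF h top_greatest])
  have "p x x \<le> p y x" using pm_facts(1,2)[OF pm, of x y] by simp
  then show "p x x < top" using 1 by (rule le_less_trans)
  have "p y y \<le> p y x" using pm_facts(1)[OF pm, of y x] by simp
  then show "p y y < top" using 1 by (rule le_less_trans)
qed

lemma recentre:
  assumes pm: "partial_metric p" and y: "y \<in> pm_ball p x e" and e: "e > 0"
  shows "\<exists>d>0. pm_ball p y d \<subseteq> pm_ball p x e"
proof -
  obtain a where a: "a \<ge> 0" "p y x = ennreal a" using fin_real ball_fin(1)[OF pm y] by blast
  obtain b where b: "b \<ge> 0" "p x x = ennreal b" using fin_real ball_fin(2)[OF pm y] by blast
  obtain c where c: "c \<ge> 0" "p y y = ennreal c" using fin_real ball_fin(3)[OF pm y] by blast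
  have "p y x < p x x + ennreal e" using y unfolding pm_ball_def by blast
  then have "ennreal a < ennreal b + ennreal e" using a b by metis
  then have ab: "a < b + e" using ennreal_add_lt[OF a(1) b(1)] e by force
  show ?thesis
  proof (intro exI conjI subsetI)
    show "b + e - a > 0" using ab by simp
    fix z assume z: "z \<in> pm_ball p y (b + e - a)"
    then have zl: "p z y < ennreal c + ennreal (b + e - a)" using c unfolding pm_ball_def by auto
    have "p z y < top" by (rule less_le_trans[OF zl top_greatest])
    then obtain d where d: "d \<ge> 0" "p z y = ennreal d" using fin_real by blast
    have "ennreal d < ennreal c + ennreal (b + e - a)" using zl d by metis
    then have dl: "d < c + (b + e - a)" using ennreal_add_lt[OF d(1) c(1)] ab by force
    have tri: "p z x + p y y \<le> p z y + p y x" using pm_facts(3)[OF pm] by blast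
    then have t2: "p z x + ennreal c \<le> ennreal d + ennreal a" using a c d by metis
    have "ennreal d + ennreal a < top" by simp
    then have "p z x < top" using lt_top_sum[OF t2] by blast
    then obtain f where f: "f \<ge> 0" "p z x = ennreal f" using fin_real by blast
    have "ennreal f + ennreal c \<le> ennreal d + ennreal a" using t2 f by metis
    then have "f + c \<le> d + a" using ennreal_add_le[OF f(1) c(1) d(1) a(1)] by blast
    then have "f < b + e" using dl by linarith
    then have "ennreal f < ennreal b + ennreal e" using ennreal_add_lt[OF f(1) b(1)] e by force
    then show "z \<in> pm_ball p x e" unfolding pm_ball_def using f b by simp
  qed
qed


lemma sum_lt_real:
  assumes "0 \<le> u" "0 \<le> v" "ennreal u + ennreal v < ennreal q"
  shows "u + v < q"
proof -
  have "ennreal (u + v) < ennreal q" using assms by (simp only: ennreal_plus[OF assms(1,2)])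
  then show ?thesis using ennreal_less_iff[of "u + v" q] assms(1,2) by simp
qed

lemma ball_real:
  assumes pm: "partial_metric p" and z: "z \<in> pm_ball p c e" and e: "e > 0"
  shows "\<exists>f a. 0 \<le> f \<and> 0 \<le> a \<and> p z c = ennreal f \<and> p c c = ennreal a \<and> a \<le> f \<and> f < a + e"
proof -
  have h: "p z c < p c c + ennreal e" using z unfolding pm_ball_def by blast
  have 1: "p z c < top" by (rule less_le_trans[OF h top_greatest])
  have cz: "p c c \<le> p z c" using pm_facts(1,2)[OF pm, of c z] by simp
  then have "p c c < top" using 1 by (rule le_less_trans)
  obtain f where f: "f \<ge> 0" "p z c = ennreal f" using fin_real 1 by blast
  obtain a where a: "a \<ge> 0" "p c c = ennreal a" using fin_real \<open>p c c < top\<close> by blast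
  have "ennreal f < ennreal a + ennreal e" using h f a by simp
  then have "f < a + e" using ennreal_add_lt[OF f(1) a(1)] e by simp
  moreover have "a \<le> f" using cz f a by simp
  ultimately show ?thesis using f a by blast
qed

lemma ball_of_real:
  assumes "p z c = ennreal f" "p c c = ennreal a" "0 \<le> f" "0 \<le> a" "f < a + e" "e > 0"
  shows "z \<in> pm_ball p c e"
proof -
  have "ennreal f < ennreal a + ennreal e" using ennreal_add_lt[of f a e] assms by simp
  then show ?thesis unfolding pm_ball_def using assms by simp
qed

lemma ball_mono: "d \<le> d' \<Longrightarrow> pm_ball p x d \<subseteq> pm_ball p x d'"
proof
  fix z assume "d \<le> d'" "z \<in> pm_ball p x d"
  then have "p z x < p x x + ennreal d" "ennreal d \<le> ennreal d'" unfolding pm_ball_def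
    by (auto intro: ennreal_leI)
  then have "p z x < p x x + ennreal d'" by (meson add_left_mono less_le_trans)
  then show "z \<in> pm_ball p x d'" unfolding pm_ball_def by simp
qed

lemma center_in:
  assumes "p x x < top" "d > 0"
  shows "x \<in> pm_ball p x d"
proof -
  obtain a where a: "a \<ge> 0" "p x x = ennreal a" using fin_real assms(1) by blast
  show ?thesis by (rule ball_of_real[of p x x a a d]) (use assms a in simp_all)
qed

lemma pm_open_iff:
  "pm_open p U \<longleftrightarrow> (\<forall>x\<in>U. \<exists>c e. e > 0 \<and> x \<in> pm_ball p c e \<and> pm_ball p c e \<subseteq> U)"
proof
  assume "pm_open p U"
  then obtain B where B: "B \<subseteq> {pm_ball p x e | x e. e > 0}" "U = \<Union>B" unfolding pm_open_def by blast
  show "\<forall>x\<in>U. \<exists>c e. e > 0 \<and> x \<in> pm_ball p c e \<and> pm_ball p c e \<subseteq> U"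
  proof
    fix x assume "x \<in> U"
    then obtain V where "V \<in> B" "x \<in> V" using B by blast
    then obtain c e where "V = pm_ball p c e" "e > 0" using B by blast
    then show "\<exists>c e. e > 0 \<and> x \<in> pm_ball p c e \<and> pm_ball p c e \<subseteq> U"
      using \<open>V \<in> B\<close> \<open>x \<in> V\<close> B(2) by blast
  qed
next
  assume h: "\<forall>x\<in>U. \<exists>c e. e > 0 \<and> x \<in> pm_ball p c e \<and> pm_ball p c e \<subseteq> U"
  define B where "B = {V. V \<subseteq> U \<and> (\<exists>c e. e > 0 \<and> V = pm_ball p c e)}"
  have "B \<subseteq> {pm_ball p x e | x e. e > 0}" unfolding B_def by blast
  moreover have "U = \<Union>B"
  proof
    show "U \<subseteq> \<Union>B"
    proof
      fix x assume "x \<in> U"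
      then obtain c e where "e > 0" "x \<in> pm_ball p c e" "pm_ball p c e \<subseteq> U" using h by blast
      then show "x \<in> \<Union>B" unfolding B_def by blast
    qed
    show "\<Union>B \<subseteq> U" unfolding B_def by blast
  qed
  ultimately show "pm_open p U" unfolding pm_open_def by blast
qed

lemma ball_open: "e > 0 \<Longrightarrow> pm_open p (pm_ball p c e)"
  unfolding pm_open_iff by blast

lemma prod_ball_sub:
  assumes pX: "partial_metric pX" and pY: "partial_metric pY"
    and fx: "pX x x < top" and fy: "pY y y < top" and d: "d > 0"
  shows "pm_ball (\<lambda>(x::'a, y::'b) (x', y'). (pX x x' + pY y y') / 2) (x, y) (d / 2)
     \<subseteq> pm_ball pX x d \<times> pm_ball pY y d"
proof
  fix z assume z: "z \<in> pm_ball (\<lambda>(x::'a, y::'b) (x', y'). (pX x x' + pY y y') / 2) (x, y) (d / 2)"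
  obtain x' y' where zz: "z = (x', y')" by force
  obtain a where a: "a \<ge> 0" "pX x x = ennreal a" using fin_real fx by blast
  obtain b where b: "b \<ge> 0" "pY y y = ennreal b" using fin_real fy by blast
  have h: "pX x' x + pY y' y < ennreal a + ennreal b + ennreal d" using z a b unfolding ballP zz by simp
  also have "\<dots> = ennreal (a + b + d)" using a b d by simp
  finally have h2: "pX x' x + pY y' y < ennreal (a + b + d)" .
  then have t: "pX x' x + pY y' y < top" by (rule less_le_trans) simp
  have "pX x' x \<le> pX x' x + pY y' y" by simp
  then have "pX x' x < top" using t by (rule le_less_trans)
  then obtain u where u: "u \<ge> 0" "pX x' x = ennreal u" using fin_real by blast
  have "pY y' y \<le> pX x' x + pY y' y" by simp
  then have "pY y' y < top" using t by (rule le_less_trans)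
  then obtain v where v: "v \<ge> 0" "pY y' y = ennreal v" using fin_real by blast
  have uv: "u + v < a + b + d" using h2 u v sum_lt_real[of u v "a + b + d"] by simp
  have "a \<le> u" using pm_facts(1)[OF pX, of x x'] pm_facts(2)[OF pX, of x x'] a u by (metis ennreal_le_iff)
  moreover have "b \<le> v" using pm_facts(1)[OF pY, of y y'] pm_facts(2)[OF pY, of y y'] b v by (metis ennreal_le_iff)
  ultimately have "u < a + d" "v < b + d" using uv by linarith+
  then have "x' \<in> pm_ball pX x d" "y' \<in> pm_ball pY y d"
    using ball_of_real[of pX x' x u a d] ball_of_real[of pY y' y v b d] u v a b d by simp_all
  then show "z \<in> pm_ball pX x d \<times> pm_ball pY y d" using zz by simp
qed

lemma prod_ball_open:
  assumes pX: "partial_metric pX" and pY: "partial_metric pY"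
    and z: "z \<in> pm_ball (\<lambda>(x::'a, y::'b) (x', y'). (pX x x' + pY y y') / 2) c e"
  shows "\<exists>h>0. pm_ball pX (fst z) h \<times> pm_ball pY (snd z) h
     \<subseteq> pm_ball (\<lambda>(x::'a, y::'b) (x', y'). (pX x x' + pY y y') / 2) c e"
proof -
  obtain x' y' where zz: "z = (x', y')" by force
  obtain x y where cc: "c = (x, y)" by force
  have h: "pX x' x + pY y' y < pX x x + pY y y + ennreal (2 * e)" using z unfolding ballP zz cc by simp
  then have t: "pX x' x + pY y' y < top" by (rule less_le_trans) simp
  have "pX x' x \<le> pX x' x + pY y' y" by simp
  then have "pX x' x < top" using t by (rule le_less_trans)
  then obtain u where u: "u \<ge> 0" "pX x' x = ennreal u" using fin_real by blast
  have "pY y' y \<le> pX x' x + pY y' y" by simp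
  then have "pY y' y < top" using t by (rule le_less_trans)
  then obtain v where v: "v \<ge> 0" "pY y' y = ennreal v" using fin_real by blast
  have axu: "pX x x \<le> pX x' x" using pm_facts(1)[OF pX, of x x'] pm_facts(2)[OF pX, of x x'] by simp
  then have "pX x x < top" using \<open>pX x' x < top\<close> by (rule le_less_trans)
  then obtain a where a: "a \<ge> 0" "pX x x = ennreal a" using fin_real by blast
  have byv: "pY y y \<le> pY y' y" using pm_facts(1)[OF pY, of y y'] pm_facts(2)[OF pY, of y y'] by simp
  then have "pY y y < top" using \<open>pY y' y < top\<close> by (rule le_less_trans)
  then obtain b where b: "b \<ge> 0" "pY y y = ennreal b" using fin_real by blast
  have au: "a \<le> u" using axu a u by simp
  have bv: "b \<le> v" using byv b v by simp
  show ?thesis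
  proof (cases "e > 0")
    case False
    then have "ennreal (2 * e) = 0" by (simp add: ennreal_neg)
    then have "u + v < a + b" using h u v a b sum_lt_real[of u v "a + b"] by simp
    then show ?thesis using au bv by linarith
  next
    case True
    have uv: "u + v < a + b + 2 * e" using h u v a b True sum_lt_real[of u v "a + b + 2 * e"] by simp
    define h0 where "h0 = (a + b + 2 * e - u - v) / 2"
    have h0: "h0 > 0" using uv unfolding h0_def by simp
    have exp: "u - a + h0 > 0" "v - b + h0 > 0" using au bv h0 by linarith+
    have "x' \<in> pm_ball pX x (u - a + h0)" by (rule ball_of_real[of pX x' x u a "u - a + h0"]) (use exp h0 u v a b in simp_all)
    then obtain dX where dX: "dX > 0" "pm_ball pX x' dX \<subseteq> pm_ball pX x (u - a + h0)"
      using recentre[OF pX _ exp(1)] by blast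
    have "y' \<in> pm_ball pY y (v - b + h0)" by (rule ball_of_real[of pY y' y v b "v - b + h0"]) (use exp h0 u v a b in simp_all)
    then obtain dY where dY: "dY > 0" "pm_ball pY y' dY \<subseteq> pm_ball pY y (v - b + h0)"
      using recentre[OF pY _ exp(2)] by blast
    show ?thesis
    proof (intro exI conjI subsetI)
      show "min dX dY > 0" using dX dY by simp
      fix w assume w: "w \<in> pm_ball pX (fst z) (min dX dY) \<times> pm_ball pY (snd z) (min dX dY)"
      obtain w1 w2 where ww: "w = (w1, w2)" by force
      have "w1 \<in> pm_ball pX x (u - a + h0)"
        using w ww zz dX(2) ball_mono[of "min dX dY" dX pX x'] by auto
      then obtain f1 a1 where f1: "0 \<le> f1" "0 \<le> a1" "pX w1 x = ennreal f1" "pX x x = ennreal a1" "f1 < a1 + (u - a + h0)"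
        using ball_real[OF pX _ exp(1)] by blast
      have "w2 \<in> pm_ball pY y (v - b + h0)"
        using w ww zz dY(2) ball_mono[of "min dX dY" dY pY y'] by auto
      then obtain f2 b2 where f2: "0 \<le> f2" "0 \<le> b2" "pY w2 y = ennreal f2" "pY y y = ennreal b2" "f2 < b2 + (v - b + h0)"
        using ball_real[OF pY _ exp(2)] by blast
      have "a1 = a" "b2 = b" using f1 f2 a b by simp_all
      have h02: "2 * h0 = a + b + 2 * e - u - v" unfolding h0_def by simp
      have "f1 + f2 < a + b + 2 * e" using f1(5) f2(5) \<open>a1 = a\<close> \<open>b2 = b\<close> h02 by linarith
      then have lt: "ennreal (f1 + f2) < ennreal (a + b + 2 * e)"
        using ennreal_less_iff[of "f1 + f2" "a + b + 2 * e"] f1(1) f2(1) by simp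
      have eq1: "pX w1 x + pY w2 y = ennreal (f1 + f2)" using f1 f2 by simp
      have eq2: "pX x x + pY y y + ennreal (2 * e) = ennreal (a + b + 2 * e)" using a b True by simp
      have "pX w1 x + pY w2 y < pX x x + pY y y + ennreal (2 * e)"
        unfolding eq1 eq2 by (rule lt)
      then show "w \<in> pm_ball (\<lambda>(x::'a, y::'b) (x', y'). (pX x x' + pY y y') / 2) c e"
        unfolding ballP ww cc by simp
    qed
  qed
qed


theorem mainTheorem6:
  fixes pX :: "'a::order \<Rightarrow> 'a \<Rightarrow> ennreal" and pY :: "'b::order \<Rightarrow> 'b \<Rightarrow> ennreal"
  assumes "scott_domain TYPE('a)" and "scott_domain TYPE('b)"
    and "partial_metric pX" and "partial_metric pY"
    and "quantified_by pX" and "quantified_by pY"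
  shows "partial_metric (\<lambda>(x::'a, y::'b) (x', y'). (pX x x' + pY y y') / 2)
     \<and> quantified_by (\<lambda>(x::'a, y::'b) (x', y'). (pX x x' + pY y y') / 2)"
proof -
  note sdX = assms(1)[unfolded scott_domain_def] and sdY = assms(2)[unfolded scott_domain_def]
  have qX: "\<And>U. scott_open U \<longleftrightarrow> pm_open pX U" using assms(5) unfolding quantified_by_def by blast
  have qY: "\<And>U. scott_open U \<longleftrightarrow> pm_open pY U" using assms(6) unfolding quantified_by_def by blast
  have finX: "\<forall>x. pX x x < top"
  proof
    fix x :: 'a
    have "pm_open pX UNIV" using univ_open sdX qX by blast
    then obtain c e where "e > 0" "x \<in> pm_ball pX c e" unfolding pm_open_iff by blast
    then show "pX x x < top" using ball_fin(3)[OF assms(3)] by blast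
  qed
  have finY: "\<forall>y. pY y y < top"
  proof
    fix y :: 'b
    have "pm_open pY UNIV" using univ_open sdY qY by blast
    then obtain c e where "e > 0" "y \<in> pm_ball pY c e" unfolding pm_open_iff by blast
    then show "pY y y < top" using ball_fin(3)[OF assms(4)] by blast
  qed
  have Q: "scott_open U \<longleftrightarrow> pm_open (\<lambda>(x::'a, y::'b) (x', y'). (pX x x' + pY y y') / 2) U" for U
  proof
    assume U: "scott_open U"
    show "pm_open (\<lambda>(x::'a, y::'b) (x', y'). (pX x x' + pY y y') / 2) U"
      unfolding pm_open_iff
    proof
      fix z assume z: "z \<in> U"
      obtain x y where zz: "z = (x, y)" by force
      obtain c d where cd: "compact_elem c" "compact_elem d" "c \<le> x" "d \<le> y" "(c, d) \<in> U"
        using alg_approx[OF _ _ U z[unfolded zz]] sdX sdY by blast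
      have oA: "pm_open pX {w. c \<le> w}" using compact_up[OF cd(1)] qX by blast
      have oB: "pm_open pY {w. d \<le> w}" using compact_up[OF cd(2)] qY by blast
      obtain c1 e1 where c1: "e1 > 0" "x \<in> pm_ball pX c1 e1" "pm_ball pX c1 e1 \<subseteq> {w. c \<le> w}"
        using oA cd(3) unfolding pm_open_iff by blast
      obtain d1 where d1: "d1 > 0" "pm_ball pX x d1 \<subseteq> pm_ball pX c1 e1"
        using recentre[OF assms(3) c1(2) c1(1)] by blast
      obtain c2 e2 where c2: "e2 > 0" "y \<in> pm_ball pY c2 e2" "pm_ball pY c2 e2 \<subseteq> {w. d \<le> w}"
        using oB cd(4) unfolding pm_open_iff by blast
      obtain d2 where d2: "d2 > 0" "pm_ball pY y d2 \<subseteq> pm_ball pY c2 e2"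
        using recentre[OF assms(4) c2(2) c2(1)] by blast
      define dd where "dd = min d1 d2"
      have dd: "dd > 0" using d1 d2 unfolding dd_def by simp
      have sub1: "pm_ball pX x dd \<subseteq> {w. c \<le> w}"
        using ball_mono[of dd d1 pX x] d1(2) c1(3) unfolding dd_def by auto
      have sub2: "pm_ball pY y dd \<subseteq> {w. d \<le> w}"
        using ball_mono[of dd d2 pY y] d2(2) c2(3) unfolding dd_def by auto
      have up: "{w. c \<le> w} \<times> {w. d \<le> w} \<subseteq> U"
      proof
        fix w assume "w \<in> {w. c \<le> w} \<times> {w. d \<le> w}"
        then have "(c, d) \<le> w" unfolding less_eq_prod_def by auto
        then show "w \<in> U" using U cd(5) unfolding scott_open_def by blast
      qed
      have "pm_ball (\<lambda>(x::'a, y::'b) (x', y'). (pX x x' + pY y y') / 2) (x, y) (dd / 2) \<subseteq> U"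
        using prod_ball_sub[OF assms(3,4) finX[rule_format, of x] finY[rule_format, of y] dd] sub1 sub2 up
        by blast
      moreover have "(x, y) \<in> pm_ball (\<lambda>(x::'a, y::'b) (x', y'). (pX x x' + pY y y') / 2) (x, y) (dd / 2)"
      proof -
        obtain a where a: "a \<ge> 0" "pX x x = ennreal a" using fin_real finX by blast
        obtain b where b: "b \<ge> 0" "pY y y = ennreal b" using fin_real finY by blast
        have lt: "ennreal (a + b) < ennreal (a + b + dd)"
          using a b dd ennreal_less_iff[of "a + b" "a + b + dd"] by simp
        have eq1: "ennreal a + ennreal b = ennreal (a + b)" using a b by simp
        have eq2: "ennreal a + ennreal b + ennreal (2 * (dd / 2)) = ennreal (a + b + dd)" using a b dd by simp
        have "ennreal a + ennreal b = ennreal (a + b)" by (rule eq1)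
        also have "\<dots> < ennreal (a + b + dd)" by (rule lt)
        also have "\<dots> = ennreal a + ennreal b + ennreal (2 * (dd / 2))" by (rule eq2[symmetric])
        finally have "ennreal a + ennreal b < ennreal a + ennreal b + ennreal (2 * (dd / 2))" .
        then show ?thesis unfolding ballP using a b by simp
      qed
      moreover have "dd / 2 > 0" using dd by simp
      ultimately show "\<exists>c e. e > 0 \<and> z \<in> pm_ball (\<lambda>(x::'a, y::'b) (x', y'). (pX x x' + pY y y') / 2) c e \<and>
          pm_ball (\<lambda>(x::'a, y::'b) (x', y'). (pX x x' + pY y y') / 2) c e \<subseteq> U"
        using zz by blast
    qed
  next
    assume U: "pm_open (\<lambda>(x::'a, y::'b) (x', y'). (pX x x' + pY y y') / 2) U"
    show "scott_open U"
    proof (rule scott_open_union, rule ballI)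
      fix z assume z: "z \<in> U"
      then obtain c e where ce: "e > 0" "z \<in> pm_ball (\<lambda>(x::'a, y::'b) (x', y'). (pX x x' + pY y y') / 2) c e"
        "pm_ball (\<lambda>(x::'a, y::'b) (x', y'). (pX x x' + pY y y') / 2) c e \<subseteq> U"
        using U unfolding pm_open_iff by blast
      obtain h where h: "h > 0" "pm_ball pX (fst z) h \<times> pm_ball pY (snd z) h
         \<subseteq> pm_ball (\<lambda>(x::'a, y::'b) (x', y'). (pX x x' + pY y y') / 2) c e"
        using prod_ball_open[OF assms(3,4) ce(2)] by blast
      have "scott_open (pm_ball pX (fst z) h)" unfolding qX by (rule ball_open[OF h(1)])
      moreover have "scott_open (pm_ball pY (snd z) h)" unfolding qY by (rule ball_open[OF h(1)])
      ultimately have "scott_open (pm_ball pX (fst z) h \<times> pm_ball pY (snd z) h)" by (rule scott_open_prod)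
      moreover have "z \<in> pm_ball pX (fst z) h \<times> pm_ball pY (snd z) h"
        using center_in[of pX "fst z" h] center_in[of pY "snd z" h] finX finY h(1) by (simp add: mem_Times_iff)
      ultimately show "\<exists>V. scott_open V \<and> z \<in> V \<and> V \<subseteq> U" using h(2) ce(3) by blast
    qed
  qed
  show ?thesis
    using pmP[OF assms(3,4) finX finY] Q unfolding quantified_by_def by blast
qed

end
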